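(* Let $R$ be a von Neumann regular ring with $\omega(\Gamma'(R))<\infty$. Then $R\cong F_1\times\cdots\times F_n$ where each $F_i$ is a field and $n=|\mathrm{Min}(R)|$.
   Context: All rings are commutative with identity $1\ne 0$. $W^*(R)$ denotes the set of non-zero non-unit elements of $R$. The cozero-divisor graph $\Gamma'(R)$ is the simple graph with vertex set $W^*(R)$, in which distinct $a,b$ are adjacent iff $a\notin Rb$ and $b\notin Ra$. A ring $R$ is von Neumann regular if for every $r\in R$ there is $s\in R$ with $r=r^2s$. $\mathrm{Min}(R)$ is the set of minimal prime ideals of $R$. $\omega(G)$ is the clique number of $G$. *)

theory Defs
  imports "HOL-Algebra.Algebra" "HOL-Library.Extended_Nat"
begin

definition nonzero_nonunits :: "('a, 'm) ring_scheme \<Rightarrow> 'a set" where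
  "nonzero_nonunits R = {a \<in> carrier R. a \<noteq> \<zero>\<^bsub>R\<^esub> \<and> a \<notin> Units R}"

definition cozero_adj :: "('a, 'm) ring_scheme \<Rightarrow> 'a \<Rightarrow> 'a \<Rightarrow> bool" where
  "cozero_adj R a b \<longleftrightarrow> a \<in> nonzero_nonunits R \<and> b \<in> nonzero_nonunits R \<and> a \<noteq> b
     \<and> a \<notin> PIdl\<^bsub>R\<^esub> b \<and> b \<notin> PIdl\<^bsub>R\<^esub> a"

definition cozero_clique :: "('a, 'm) ring_scheme \<Rightarrow> 'a set \<Rightarrow> bool" where
  "cozero_clique R S \<longleftrightarrow> S \<subseteq> nonzero_nonunits R \<and>
     (\<forall>a\<in>S. \<forall>b\<in>S. a \<noteq> b \<longrightarrow> cozero_adj R a b)"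

definition cozero_clique_number :: "('a, 'm) ring_scheme \<Rightarrow> enat" where
  "cozero_clique_number R =
     (if \<exists>S. cozero_clique R S \<and> infinite S then \<infinity>
      else Sup {enat (card S) | S. cozero_clique R S})"

definition von_neumann_regular :: "('a, 'm) ring_scheme \<Rightarrow> bool" where
  "von_neumann_regular R \<longleftrightarrow>
     (\<forall>r\<in>carrier R. \<exists>s\<in>carrier R. r = r \<otimes>\<^bsub>R\<^esub> r \<otimes>\<^bsub>R\<^esub> s)"

definition min_primes :: "('a, 'm) ring_scheme \<Rightarrow> 'a set set" where
  "min_primes R = {P. primeideal P R \<and> (\<forall>Q. primeideal Q R \<and> Q \<subseteq> P \<longrightarrow> Q = P)}"

end

theory Submission
  imports Defs
begin

lemma (in cring) exists_maximal:
  assumes J: "ideal J R" and one: "\<one> \<notin> J"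
  shows "\<exists>M. maximalideal M R \<and> J \<subseteq> M"
proof -
  define A where "A = {I. ideal I R \<and> J \<subseteq> I \<and> \<one> \<notin> I}"
  have "\<exists>M\<in>A. \<forall>Y\<in>A. M \<subseteq> Y \<longrightarrow> Y = M"
  proof (rule subset_Zorn_nonempty)
    show "A \<noteq> {}" using J one unfolding A_def by blast
  next
    fix C assume C: "C \<noteq> {}" "subset.chain A C"
    have "subset.chain {I. ideal I R} C" using C(2) unfolding subset_chain_def A_def by blast
    from chain_Union_is_ideal[OF this] C(1) have "ideal (\<Union>C) R" by simp
    moreover have "J \<subseteq> \<Union>C" using C unfolding subset_chain_def A_def by blast
    moreover have "\<one> \<notin> \<Union>C" using C unfolding subset_chain_def A_def by blast
    ultimately show "\<Union>C \<in> A" unfolding A_def by blast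
  qed
  then obtain M where M: "M \<in> A" and mx: "\<forall>Y\<in>A. M \<subseteq> Y \<longrightarrow> Y = M" by blast
  have "maximalideal M R"
  proof (rule maximalidealI)
    show "ideal M R" using M unfolding A_def by blast
    show "carrier R \<noteq> M" using M unfolding A_def by blast
    fix J' assume "ideal J' R" "M \<subseteq> J'" "J' \<subseteq> carrier R"
    then show "J' = M \<or> J' = carrier R"
      using mx M ideal.one_imp_carrier unfolding A_def by blast
  qed
  then show ?thesis using M unfolding A_def by blast
qed

lemma (in cring) vnr_prime_maximal:
  assumes vnr: "von_neumann_regular R" and P: "primeideal P R"
  shows "maximalideal P R"
proof (rule maximalidealI)
  interpret primeideal P R by fact
  show "ideal P R" by (rule is_ideal)
  show "carrier R \<noteq> P" by (rule I_notcarr)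
  fix J assume J: "ideal J R" "P \<subseteq> J" "J \<subseteq> carrier R"
  show "J = P \<or> J = carrier R"
  proof (rule ccontr)
    assume "\<not> (J = P \<or> J = carrier R)"
    then obtain a where a: "a \<in> J" "a \<notin> P" using J by blast
    have ac: "a \<in> carrier R" using a J by blast
    obtain s where s: "s \<in> carrier R" "a = a \<otimes> a \<otimes> s" using vnr ac unfolding von_neumann_regular_def by blast
    have "a \<otimes> (\<one> \<ominus> a \<otimes> s) = a \<ominus> a \<otimes> a \<otimes> s" using ac s by algebra
    also have "\<dots> = \<zero>" using s ac by (metis r_neg minus_eq)
    finally have "a \<otimes> (\<one> \<ominus> a \<otimes> s) \<in> P" by (simp add: additive_subgroup.zero_closed[OF is_additive_subgroup])
    hence "\<one> \<ominus> a \<otimes> s \<in> P" using I_prime[of a "\<one> \<ominus> a \<otimes> s"] ac s(1) a(2) by auto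
    hence j1: "\<one> \<ominus> a \<otimes> s \<in> J" using J by blast
    have j2: "a \<otimes> s \<in> J" using ideal.I_r_closed[OF J(1) a(1) s(1)] .
    have "(\<one> \<ominus> a \<otimes> s) \<oplus> a \<otimes> s = \<one>" using ac s by algebra
    hence "\<one> \<in> J" using j1 j2 additive_subgroup.a_closed[OF ideal.axioms(1)[OF J(1)]] by metis
    hence "J = carrier R" using ideal.one_imp_carrier[OF J(1)] by blast
    thus False using \<open>\<not> (J = P \<or> J = carrier R)\<close> by blast
  qed
qed

lemma (in cring) avoid:
  assumes P: "primeideal P R" and fin: "finite T" and T: "\<forall>Q\<in>T. ideal Q R \<and> \<not> Q \<subseteq> P"
  shows "\<exists>x\<in>carrier R. x \<notin> P \<and> (\<forall>Q\<in>T. x \<in> Q)"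
  using fin T
proof (induction T rule: finite_induct)
  case empty
  have "\<one> \<notin> P" using primeideal.I_notcarr[OF P] ideal.one_imp_carrier[OF primeideal.axioms(1)[OF P]] by blast
  then show ?case by auto
next
  case (insert Q T)
  then obtain x where x: "x \<in> carrier R" "x \<notin> P" "\<forall>Q\<in>T. x \<in> Q" by auto
  from insert.prems obtain b where b: "b \<in> Q" "b \<notin> P" "ideal Q R" by auto
  have bc: "b \<in> carrier R" using ideal.Icarr[OF b(3) b(1)] .
  have "x \<otimes> b \<notin> P"
  proof
    assume "x \<otimes> b \<in> P"
    hence "x \<in> P \<or> b \<in> P" using primeideal.I_prime[OF P x(1) bc] by simp
    thus False using x(2) b(2) by simp
  qed
  moreover have "\<forall>Q'\<in>insert Q T. x \<otimes> b \<in> Q'"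
  proof
    fix Q' assume "Q' \<in> insert Q T"
    then consider "Q' = Q" | "Q' \<in> T" by blast
    then show "x \<otimes> b \<in> Q'"
    proof cases
      case 1 then show ?thesis using ideal.I_l_closed[OF b(3) b(1) x(1)] by simp
    next
      case 2
      have "ideal Q' R" using 2 insert.prems by blast
      then show ?thesis using ideal.I_r_closed[of Q' R x b] 2 x(3) bc by blast
    qed
  qed
  moreover have "x \<otimes> b \<in> carrier R" using x(1) bc by simp
  ultimately show ?case by blast
qed

lemma (in cring) vnr_avoid:
  assumes vnr: "von_neumann_regular R" and a: "a \<in> carrier R" "a \<noteq> \<zero>"
  shows "\<exists>M. maximalideal M R \<and> a \<notin> M"
proof -
  obtain s where s: "s \<in> carrier R" "a = a \<otimes> a \<otimes> s" using vnr a unfolding von_neumann_regular_def by blast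
  define e where "e = a \<otimes> s"
  have ec: "e \<in> carrier R" using a s e_def by simp
  have ae0: "a \<otimes> e = a \<otimes> a \<otimes> s" unfolding e_def using a(1) s(1) by (simp add: m_assoc)
  have ae: "a \<otimes> e = a" using ae0 s(2)[symmetric] by (rule trans)
  have ee0: "e \<otimes> e = (a \<otimes> a \<otimes> s) \<otimes> s" unfolding e_def using a(1) s(1) by algebra
  have ee: "e \<otimes> e = e" using ee0 unfolding s(2)[symmetric] e_def .
  have oc: "\<one> \<ominus> e \<in> carrier R" using ec by simp
  have "\<one> \<notin> PIdl (\<one> \<ominus> e)"
  proof
    assume "\<one> \<in> PIdl (\<one> \<ominus> e)"
    then obtain x where x: "x \<in> carrier R" "\<one> = x \<otimes> (\<one> \<ominus> e)" unfolding cgenideal_def by blast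
    have "e = e \<otimes> (x \<otimes> (\<one> \<ominus> e))" using x ec by (metis r_one)
    also have "\<dots> = x \<otimes> (e \<ominus> e \<otimes> e)" using x(1) ec by algebra
    also have "\<dots> = x \<otimes> (e \<ominus> e)" using ee by simp
    also have "\<dots> = \<zero>" using ec x(1) by algebra
    finally have "e = \<zero>" .
    hence "a = \<zero>" using ae a(1) by simp
    thus False using a by blast
  qed
  then obtain M where M: "maximalideal M R" "PIdl (\<one> \<ominus> e) \<subseteq> M"
    using exists_maximal[OF cgenideal_ideal[OF oc]] by blast
  have "a \<notin> M"
  proof
    assume "a \<in> M"
    hence "e \<in> M" unfolding e_def using ideal.I_r_closed[OF maximalideal.axioms(1)[OF M(1)] _ s(1)] by blast
    moreover have "\<one> \<ominus> e \<in> M" using M(2) cgenideal_self[OF oc] by blast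
    ultimately have "(\<one> \<ominus> e) \<oplus> e \<in> M"
      using additive_subgroup.a_closed[OF ideal.axioms(1)[OF maximalideal.axioms(1)[OF M(1)]]] by blast
    moreover have "(\<one> \<ominus> e) \<oplus> e = \<one>" using ec by algebra
    ultimately have "\<one> \<in> M" by simp
    thus False using maximalideal.I_notcarr[OF M(1)] ideal.one_imp_carrier[OF maximalideal.axioms(1)[OF M(1)]] by blast
  qed
  thus ?thesis using M by blast
qed

lemma (in ring) max_no_unit:
  assumes M: "maximalideal M R" and u: "u \<in> Units R"
  shows "u \<notin> M"
proof
  assume uM: "u \<in> M"
  have "inv u \<otimes> u = \<one>" using Units_l_inv[OF u] .
  moreover have "inv u \<otimes> u \<in> M" using ideal.I_l_closed[OF maximalideal.axioms(1)[OF M] uM Units_inv_closed[OF u]] .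
  ultimately have "\<one> \<in> M" by simp
  thus False using maximalideal.I_notcarr[OF M] ideal.one_imp_carrier[OF maximalideal.axioms(1)[OF M]] by blast
qed

lemma (in ring) max_not_subset:
  assumes M: "maximalideal M R" and Q: "maximalideal Q R" and ne: "Q \<noteq> M"
  shows "\<not> Q \<subseteq> M"
proof
  assume "Q \<subseteq> M"
  hence "M = Q \<or> M = carrier R"
    using maximalideal.I_maximal[OF Q maximalideal.axioms(1)[OF M]] ideal.Icarr[OF maximalideal.axioms(1)[OF M]] by blast
  thus False using ne maximalideal.I_notcarr[OF M] by blast
qed

lemma (in ring) comaximal:
  assumes I: "maximalideal I R" and J: "maximalideal J R" and ne: "I \<noteq> J"
  shows "I <+> J = carrier R"
proof -
  have iI: "ideal I R" and iJ: "ideal J R" using I J maximalideal.axioms(1) by auto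
  have K: "ideal (I <+> J) R" using add_ideals[OF iI iJ] .
  have IK: "I \<subseteq> I <+> J"
  proof
    fix i assume "i \<in> I"
    moreover have "\<zero> \<in> J" using additive_subgroup.zero_closed[OF ideal.axioms(1)[OF iJ]] .
    moreover have "i \<oplus> \<zero> = i" using \<open>i \<in> I\<close> ideal.Icarr[OF iI] by simp
    ultimately show "i \<in> I <+> J" unfolding set_add_def' by force
  qed
  have JK: "J \<subseteq> I <+> J"
  proof
    fix j assume "j \<in> J"
    moreover have "\<zero> \<in> I" using additive_subgroup.zero_closed[OF ideal.axioms(1)[OF iI]] .
    moreover have "\<zero> \<oplus> j = j" using \<open>j \<in> J\<close> ideal.Icarr[OF iJ] by simp
    ultimately show "j \<in> I <+> J" unfolding set_add_def' by force
  qed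
  have "I <+> J \<subseteq> carrier R" using ideal.Icarr[OF K] by blast
  hence "I <+> J = I \<or> I <+> J = carrier R" using maximalideal.I_maximal[OF I K IK] by blast
  moreover have "I <+> J \<noteq> I" using JK max_not_subset[OF I J] ne by blast
  ultimately show ?thesis by blast
qed

lemma clique_bound:
  assumes "cozero_clique_number R < \<infinity>"
  shows "\<exists>N::nat. \<forall>S. cozero_clique R S \<longrightarrow> finite S \<and> card S \<le> N"
proof -
  have ni: "\<not> (\<exists>S. cozero_clique R S \<and> infinite S)"
    using assms unfolding cozero_clique_number_def by (auto split: if_splits)
  define Xs where "Xs = {enat (card S) | S. cozero_clique R S}"
  have "Sup Xs < \<infinity>" using assms ni unfolding cozero_clique_number_def Xs_def by simp
  then obtain N where N: "Sup Xs = enat N" by (cases "Sup Xs") auto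
  have "\<forall>S. cozero_clique R S \<longrightarrow> finite S \<and> card S \<le> N"
  proof (intro allI impI)
    fix S assume S: "cozero_clique R S"
    have "enat (card S) \<le> Sup Xs" using S unfolding Xs_def by (blast intro: Sup_upper)
    thus "finite S \<and> card S \<le> N" using N ni S by auto
  qed
  thus ?thesis by blast
qed

lemma (in cring) clique_from_maximals:
  assumes fin: "finite T" and T: "\<forall>M\<in>T. maximalideal M R" and two: "2 \<le> card T"
  shows "\<exists>S. cozero_clique R S \<and> finite S \<and> card S = card T"
proof -
  have ex: "\<forall>M\<in>T. \<exists>x. x \<in> carrier R \<and> x \<notin> M \<and> (\<forall>Q\<in>T - {M}. x \<in> Q)"
  proof
    fix M assume M: "M \<in> T"
    have mM: "maximalideal M R" using T M by blast
    have "\<exists>x\<in>carrier R. x \<notin> M \<and> (\<forall>Q\<in>T - {M}. x \<in> Q)"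
    proof (rule avoid)
      show "primeideal M R" using maximalideal_prime[OF mM] .
      show "finite (T - {M})" using fin by simp
      show "\<forall>Q\<in>T - {M}. ideal Q R \<and> \<not> Q \<subseteq> M"
      proof
        fix Q assume Q: "Q \<in> T - {M}"
        have mQ: "maximalideal Q R" using T Q by blast
        show "ideal Q R \<and> \<not> Q \<subseteq> M"
          using maximalideal.axioms(1)[OF mQ] max_not_subset[OF mM mQ] Q by blast
      qed
    qed
    thus "\<exists>x. x \<in> carrier R \<and> x \<notin> M \<and> (\<forall>Q\<in>T - {M}. x \<in> Q)" by blast
  qed
  then obtain f where f: "\<forall>M\<in>T. f M \<in> carrier R \<and> f M \<notin> M \<and> (\<forall>Q\<in>T - {M}. f M \<in> Q)"
    using bchoice[OF ex] by blast
  have inj: "inj_on f T"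
  proof (rule inj_onI)
    fix M M' assume a: "M \<in> T" "M' \<in> T" "f M = f M'"
    show "M = M'"
    proof (rule ccontr)
      assume "M \<noteq> M'"
      hence "M \<in> T - {M'}" using a(1) by blast
      hence "f M' \<in> M" using f a(2) by blast
      moreover have "f M \<notin> M" using f a(1) by blast
      ultimately show False using a(3) by simp
    qed
  qed
  have card: "card (f ` T) = card T" using card_image[OF inj] .
  have other: "\<exists>M'\<in>T. M' \<noteq> M" if "M \<in> T" for M
  proof (rule ccontr)
    assume "\<not> ?thesis"
    hence "T \<subseteq> {M}" by blast
    hence "card T \<le> 1" using card_mono[of "{M}" T] by simp
    thus False using two by simp
  qed
  have nzu: "f M \<in> nonzero_nonunits R" if M: "M \<in> T" for M
  proof -
    have mM: "maximalideal M R" using T M by blast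
    have "\<zero> \<in> M" using additive_subgroup.zero_closed[OF ideal.axioms(1)[OF maximalideal.axioms(1)[OF mM]]] .
    moreover have "f M \<notin> M" using f M by blast
    ultimately have nz: "f M \<noteq> \<zero>" by metis
    obtain M' where M': "M' \<in> T" "M' \<noteq> M" using other[OF M] by blast
    have "M' \<in> T - {M}" using M' by blast
    hence "f M \<in> M'" using f M by blast
    moreover have "maximalideal M' R" using T M'(1) by blast
    ultimately have "f M \<notin> Units R" using max_no_unit[of M' "f M"] by blast
    moreover have "f M \<in> carrier R" using f M by blast
    ultimately show ?thesis using nz unfolding nonzero_nonunits_def by blast
  qed
  have notin: "f M \<notin> PIdl (f M')" if "M \<in> T" "M' \<in> T" "M \<noteq> M'" for M M'
  proof
    assume "f M \<in> PIdl (f M')"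
    then obtain r where r: "r \<in> carrier R" "f M = r \<otimes> f M'" unfolding cgenideal_def by blast
    have mM: "maximalideal M R" using T that by blast
    have "M \<in> T - {M'}" using that by blast
    hence "f M' \<in> M" using f that(2) by blast
    hence "r \<otimes> f M' \<in> M" using ideal.I_l_closed[OF maximalideal.axioms(1)[OF mM] _ r(1)] by blast
    moreover have "f M \<notin> M" using f that(1) by blast
    ultimately show False using r(2) by simp
  qed
  have "cozero_clique R (f ` T)"
    unfolding cozero_clique_def
  proof (intro conjI ballI impI)
    show "f ` T \<subseteq> nonzero_nonunits R" using nzu by blast
    fix a b assume ab: "a \<in> f ` T" "b \<in> f ` T" "a \<noteq> b"
    then obtain M M' where MM: "M \<in> T" "M' \<in> T" "a = f M" "b = f M'" by blast
    have "M \<noteq> M'" using ab MM by auto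
    thus "cozero_adj R a b" unfolding cozero_adj_def using nzu[OF MM(1)] nzu[OF MM(2)] notin[OF MM(1,2)] notin[OF MM(2,1)] MM ab(3) by simp
  qed
  thus ?thesis using card finite_imageI[OF fin] by blast
qed

theorem lemma2p2:
  fixes R :: "('a, 'm) ring_scheme"
  assumes "cring R"
    and "\<one>\<^bsub>R\<^esub> \<noteq> \<zero>\<^bsub>R\<^esub>"
    and "von_neumann_regular R"
    and "cozero_clique_number R < \<infinity>"
  shows "finite (min_primes R) \<and>
    (\<exists>Fs :: 'a set ring list. (\<forall>F\<in>set Fs. field F) \<and> length Fs = card (min_primes R)
        \<and> R \<simeq> RDirProd_list Fs)"
proof -
  interpret cring R by fact
  have vnr: "von_neumann_regular R" by fact
  have mp: "min_primes R = {M. maximalideal M R}"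
  proof (rule Set.set_eqI, rule iffI)
    fix P assume "P \<in> min_primes R"
    hence "primeideal P R" unfolding min_primes_def by blast
    thus "P \<in> {M. maximalideal M R}" using vnr_prime_maximal[OF vnr] by blast
  next
    fix M assume "M \<in> {M. maximalideal M R}"
    hence mM: "maximalideal M R" by blast
    have "primeideal M R" using maximalideal_prime[OF mM] .
    moreover have "\<forall>Q. primeideal Q R \<and> Q \<subseteq> M \<longrightarrow> Q = M"
    proof (intro allI impI)
      fix Q assume Q: "primeideal Q R \<and> Q \<subseteq> M"
      have mQ: "maximalideal Q R" using vnr_prime_maximal[OF vnr] Q by blast
      show "Q = M" using max_not_subset[OF mM mQ] Q by blast
    qed
    ultimately show "M \<in> min_primes R" unfolding min_primes_def by blast
  qed
  obtain N where N: "\<forall>S. cozero_clique R S \<longrightarrow> finite S \<and> card S \<le> N"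
    using clique_bound[OF assms(4)] by blast
  have fin: "finite {M. maximalideal M R}"
  proof (rule ccontr)
    assume "infinite {M. maximalideal M R}"
    then obtain T where T: "finite T" "card T = N + 2" "T \<subseteq> {M. maximalideal M R}"
      using infinite_arbitrarily_large by blast
    obtain S where S: "cozero_clique R S" "finite S" "card S = card T"
      using clique_from_maximals[OF T(1)] T by auto
    thus False using N T(2) by fastforce
  qed
  define k where "k = card {M. maximalideal M R}"
  obtain g where g: "bij_betw g {0..<k} {M. maximalideal M R}"
    using ex_bij_betw_nat_finite[OF fin] unfolding k_def by blast
  obtain M0 where M0: "maximalideal M0 R"
    using exists_maximal[OF zeroideal] assms(2) by blast
  have "k \<noteq> 0" unfolding k_def using fin M0 by auto
  then obtain n where kn: "k = Suc n" by (cases k) auto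
  have gm: "maximalideal (g i) R" if "i \<le> n" for i
    using g that kn unfolding bij_betw_def by auto
  have idl: "\<And>i. i \<le> n \<Longrightarrow> ideal (g i) R" using gm maximalideal.axioms(1) by blast
  have com: "\<And>i j. \<lbrakk> i \<le> n; j \<le> n \<rbrakk> \<Longrightarrow> i \<noteq> j \<Longrightarrow> g i <+>\<^bsub>R\<^esub> g j = carrier R"
  proof -
    fix i j assume ij: "i \<le> n" "j \<le> n" "i \<noteq> j"
    have "g i \<noteq> g j" using g ij kn unfolding bij_betw_def inj_on_def by auto
    thus "g i <+>\<^bsub>R\<^esub> g j = carrier R" using comaximal[OF gm[OF ij(1)] gm[OF ij(2)]] by blast
  qed
  have img: "g ` {..n} = {M. maximalideal M R}"
  proof -
    have "{..n} = {0..<k}" using kn by auto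
    thus ?thesis using g unfolding bij_betw_def by simp
  qed
  have inter: "(\<Inter>i \<le> n. g i) = {\<zero>\<^bsub>R\<^esub>}"
  proof (rule Set.set_eqI, rule iffI)
    fix a assume a: "a \<in> (\<Inter>i \<le> n. g i)"
    hence aM: "\<forall>M. maximalideal M R \<longrightarrow> a \<in> M" using img by blast
    have "a \<in> M0" using aM M0 by blast
    hence ac: "a \<in> carrier R" using ideal.Icarr[OF maximalideal.axioms(1)[OF M0]] by blast
    show "a \<in> {\<zero>\<^bsub>R\<^esub>}"
    proof (rule ccontr)
      assume "a \<notin> {\<zero>\<^bsub>R\<^esub>}"
      then obtain M where "maximalideal M R" "a \<notin> M" using vnr_avoid[OF vnr ac] by blast
      thus False using aM by blast
    qed
  next
    fix a assume "a \<in> {\<zero>\<^bsub>R\<^esub>}"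
    hence "a = \<zero>\<^bsub>R\<^esub>" by simp
    thus "a \<in> (\<Inter>i \<le> n. g i)"
      using idl additive_subgroup.zero_closed[OF ideal.axioms(1)] by blast
  qed
  have iso: "R \<simeq> RDirProd_list (map (\<lambda>i. R Quot (g i)) [0..< Suc n])"
  proof -
    have "R Quot (\<Inter>i \<le> n. g i) \<simeq> RDirProd_list (map (\<lambda>i. R Quot (g i)) [0..< Suc n])"
      by (rule chinese_remainder) (use idl com in auto)
    hence "R Quot {\<zero>\<^bsub>R\<^esub>} \<simeq> RDirProd_list (map (\<lambda>i. R Quot (g i)) [0..< Suc n])"
      unfolding inter .
    thus ?thesis using ring_iso_trans[OF FactRing_zeroideal(2)] by blast
  qed
  have fields: "\<forall>F\<in>set (map (\<lambda>i. R Quot (g i)) [0..< Suc n]). field F"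
  proof
    fix F assume "F \<in> set (map (\<lambda>i. R Quot (g i)) [0..< Suc n])"
    then obtain i where i0: "i \<in> set [0..< Suc n]" "F = R Quot (g i)" unfolding set_map by blast
    hence i: "i \<le> n" "F = R Quot (g i)" by auto
    show "field F" using maximalideal.quotient_is_field[OF gm[OF i(1)] assms(1)] i(2) by simp
  qed
  have len: "length (map (\<lambda>i. R Quot (g i)) [0..< Suc n]) = card (min_primes R)"
    using kn unfolding mp k_def by simp
  show ?thesis using fin fields len iso unfolding mp by blast
qed

end
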